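(* Let $\mathcal C$ be a category with cofibrations (in the sense of Waldhausen) which is enriched over the category of abelian groups (hence additive), and let $w$ be an admissible class of morphisms in $\mathcal C$. Then $w$ satisfies Waldhausen's gluing axiom: given a commutative diagram $$y \leftarrow x \rightarrowtail z,\qquad y' \leftarrow x' \rightarrowtail z'$$ with $x\rightarrowtail z$ and $x'\rightarrowtail z'$ cofibrations and vertical morphisms $b\colon y\to y'$, $a\colon x\to x'$, $c\colon z\to z'$ all in $w$ and compatible with the horizontal maps, the induced morphism $b\sqcup_a c\colon y\sqcup_x z\to y'\sqcup_{x'} z'$ is in $w$. In particular $(\mathcal C,w)$ is a category with cofibrations and weak equivalences (Waldhausen category).
   Context: A cofibration sequence in $\mathcal C$ is a sequence $x\rightarrowtail y\twoheadrightarrow y/x$ where $x\rightarrowtail y$ is a cofibration and $y/x$ its cokernel (pushout along $x\to 0$). A class $w$ of morphisms in $\mathcal C$ is called admissible if: (i) $w$ contains all isomorphisms; (ii) $w$ satisfies two-out-of-three: for composable $x\xrightarrow{f}y\xrightarrow{g}z$, if two of $f,g,gf$ lie in $w$ so does the third; (iii) for any commutative diagram of cofibration sequences $x\rightarrowtail y\twoheadrightarrow y/x$ over $x'\rightarrowtail y'\twoheadrightarrow y'/x'$ with vertical maps $a\colon x\to x'$, $b\colon y\to y'$, $c\colon y/x\to y'/x'$, if two of $a,b,c$ are in $w$ then so is the third. *)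

theory Defs
  imports "HOL-Algebra.Group"
begin

text \<open>A category with cofibrations which is enriched over abelian groups, presented
  concretely: a set of objects, a set of morphisms, domain/codomain, identities,
  composition (Comp g f = g after f), addition of parallel morphisms with zero
  morphisms Zero x y, a distinguished zero object Zob and a class Cof of cofibrations.\<close>

record ('o, 'm) cofcat =
  Ob   :: "'o set"
  Mor  :: "'m set"
  Dom  :: "'m \<Rightarrow> 'o"
  Cod  :: "'m \<Rightarrow> 'o"
  Id   :: "'o \<Rightarrow> 'm"
  Comp :: "'m \<Rightarrow> 'm \<Rightarrow> 'm"
  Add  :: "'m \<Rightarrow> 'm \<Rightarrow> 'm"
  Zero :: "'o \<Rightarrow> 'o \<Rightarrow> 'm"
  Zob  :: "'o"
  Cof  :: "'m set"

definition hom :: "('o, 'm, 'e) cofcat_scheme \<Rightarrow> 'o \<Rightarrow> 'o \<Rightarrow> 'm set" where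
  "hom C x y = {f \<in> Mor C. Dom C f = x \<and> Cod C f = y}"

definition category :: "('o, 'm, 'e) cofcat_scheme \<Rightarrow> bool" where
  "category C \<longleftrightarrow>
     (\<forall>f \<in> Mor C. Dom C f \<in> Ob C \<and> Cod C f \<in> Ob C) \<and>
     (\<forall>x \<in> Ob C. Id C x \<in> hom C x x) \<and>
     (\<forall>f \<in> Mor C. \<forall>g \<in> Mor C. Cod C f = Dom C g \<longrightarrow> Comp C g f \<in> hom C (Dom C f) (Cod C g)) \<and>
     (\<forall>f \<in> Mor C. Comp C f (Id C (Dom C f)) = f \<and> Comp C (Id C (Cod C f)) f = f) \<and>
     (\<forall>f \<in> Mor C. \<forall>g \<in> Mor C. \<forall>h \<in> Mor C. Cod C f = Dom C g \<longrightarrow> Cod C g = Dom C h \<longrightarrow>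
        Comp C h (Comp C g f) = Comp C (Comp C h g) f)"

definition hom_group :: "('o, 'm, 'e) cofcat_scheme \<Rightarrow> 'o \<Rightarrow> 'o \<Rightarrow> 'm monoid" where
  "hom_group C x y = \<lparr>carrier = hom C x y, mult = Add C, one = Zero C x y\<rparr>"

definition ab_enriched :: "('o, 'm, 'e) cofcat_scheme \<Rightarrow> bool" where
  "ab_enriched C \<longleftrightarrow>
     (\<forall>x \<in> Ob C. \<forall>y \<in> Ob C. comm_group (hom_group C x y)) \<and>
     (\<forall>x \<in> Ob C. \<forall>y \<in> Ob C. \<forall>z \<in> Ob C.
        (\<forall>f \<in> hom C x y. \<forall>g \<in> hom C y z. \<forall>g' \<in> hom C y z.
            Comp C (Add C g g') f = Add C (Comp C g f) (Comp C g' f)) \<and>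
        (\<forall>f \<in> hom C x y. \<forall>f' \<in> hom C x y. \<forall>g \<in> hom C y z.
            Comp C g (Add C f f') = Add C (Comp C g f) (Comp C g f')))"

definition iso :: "('o, 'm, 'e) cofcat_scheme \<Rightarrow> 'm \<Rightarrow> bool" where
  "iso C f \<longleftrightarrow> f \<in> Mor C \<and>
     (\<exists>g \<in> hom C (Cod C f) (Dom C f). Comp C g f = Id C (Dom C f) \<and> Comp C f g = Id C (Cod C f))"

definition zero_object :: "('o, 'm, 'e) cofcat_scheme \<Rightarrow> 'o \<Rightarrow> bool" where
  "zero_object C z \<longleftrightarrow> z \<in> Ob C \<and>
     (\<forall>x \<in> Ob C. (\<exists>!f. f \<in> hom C z x) \<and> (\<exists>!f. f \<in> hom C x z))"

definition is_pushout :: "('o, 'm, 'e) cofcat_scheme \<Rightarrow> 'm \<Rightarrow> 'm \<Rightarrow> 'm \<Rightarrow> 'm \<Rightarrow> bool" where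
  "is_pushout C f i j g \<longleftrightarrow>
     f \<in> Mor C \<and> i \<in> Mor C \<and> Dom C f = Dom C i \<and>
     j \<in> hom C (Cod C f) (Cod C j) \<and> g \<in> hom C (Cod C i) (Cod C j) \<and>
     Comp C j f = Comp C g i \<and>
     (\<forall>q u v. u \<in> hom C (Cod C f) q \<and> v \<in> hom C (Cod C i) q \<and> Comp C u f = Comp C v i \<longrightarrow>
        (\<exists>!h. h \<in> hom C (Cod C j) q \<and> Comp C h j = u \<and> Comp C h g = v))"

definition cat_with_cof :: "('o, 'm, 'e) cofcat_scheme \<Rightarrow> bool" where
  "cat_with_cof C \<longleftrightarrow>
     category C \<and> zero_object C (Zob C) \<and> Cof C \<subseteq> Mor C \<and>
     (\<forall>f. iso C f \<longrightarrow> f \<in> Cof C) \<and>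
     (\<forall>f \<in> Cof C. \<forall>g \<in> Cof C. Cod C f = Dom C g \<longrightarrow> Comp C g f \<in> Cof C) \<and>
     (\<forall>x \<in> Ob C. \<forall>f \<in> hom C (Zob C) x. f \<in> Cof C) \<and>
     (\<forall>i \<in> Cof C. \<forall>f \<in> Mor C. Dom C f = Dom C i \<longrightarrow>
        (\<exists>j g. is_pushout C f i j g \<and> j \<in> Cof C))"

definition cof_seq :: "('o, 'm, 'e) cofcat_scheme \<Rightarrow> 'm \<Rightarrow> 'm \<Rightarrow> bool" where
  "cof_seq C i q \<longleftrightarrow> i \<in> Cof C \<and>
     (\<exists>t s. t \<in> hom C (Dom C i) (Zob C) \<and> is_pushout C i t q s)"

definition admissible :: "('o, 'm, 'e) cofcat_scheme \<Rightarrow> 'm set \<Rightarrow> bool" where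
  "admissible C w \<longleftrightarrow> w \<subseteq> Mor C \<and>
     (\<forall>f. iso C f \<longrightarrow> f \<in> w) \<and>
     (\<forall>f \<in> Mor C. \<forall>g \<in> Mor C. Cod C f = Dom C g \<longrightarrow>
        (f \<in> w \<and> g \<in> w \<longrightarrow> Comp C g f \<in> w) \<and>
        (f \<in> w \<and> Comp C g f \<in> w \<longrightarrow> g \<in> w) \<and>
        (g \<in> w \<and> Comp C g f \<in> w \<longrightarrow> f \<in> w)) \<and>
     (\<forall>i q i' q' a b c.
        cof_seq C i q \<and> cof_seq C i' q' \<and>
        a \<in> hom C (Dom C i) (Dom C i') \<and> b \<in> hom C (Cod C i) (Cod C i') \<and>
        c \<in> hom C (Cod C q) (Cod C q') \<and>
        Comp C b i = Comp C i' a \<and> Comp C c q = Comp C q' b \<longrightarrow>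
        (a \<in> w \<and> b \<in> w \<longrightarrow> c \<in> w) \<and>
        (a \<in> w \<and> c \<in> w \<longrightarrow> b \<in> w) \<and>
        (b \<in> w \<and> c \<in> w \<longrightarrow> a \<in> w))"

definition gluing :: "('o, 'm, 'e) cofcat_scheme \<Rightarrow> 'm set \<Rightarrow> bool" where
  "gluing C w \<longleftrightarrow>
     (\<forall>f i j g f' i' j' g' a b c h.
        is_pushout C f i j g \<and> is_pushout C f' i' j' g' \<and> i \<in> Cof C \<and> i' \<in> Cof C \<and>
        a \<in> hom C (Dom C f) (Dom C f') \<and> b \<in> hom C (Cod C f) (Cod C f') \<and>
        c \<in> hom C (Cod C i) (Cod C i') \<and>
        Comp C b f = Comp C f' a \<and> Comp C c i = Comp C i' a \<and>
        a \<in> w \<and> b \<in> w \<and> c \<in> w \<and>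
        h \<in> hom C (Cod C j) (Cod C j') \<and> Comp C h j = Comp C j' b \<and> Comp C h g = Comp C g' c
        \<longrightarrow> h \<in> w)"

definition waldhausen_cat :: "('o, 'm, 'e) cofcat_scheme \<Rightarrow> 'm set \<Rightarrow> bool" where
  "waldhausen_cat C w \<longleftrightarrow> cat_with_cof C \<and> w \<subseteq> Mor C \<and>
     (\<forall>f. iso C f \<longrightarrow> f \<in> w) \<and>
     (\<forall>f \<in> w. \<forall>g \<in> w. Cod C f = Dom C g \<longrightarrow> Comp C g f \<in> w) \<and>
     gluing C w"

end

theory Submission
  imports Defs
begin

lemma homI: "f \<in> Mor C \<Longrightarrow> Dom C f = x \<Longrightarrow> Cod C f = y \<Longrightarrow> f \<in> hom C x y"
  by (simp add: hom_def)

lemma homD: "f \<in> hom C x y \<Longrightarrow> f \<in> Mor C \<and> Dom C f = x \<and> Cod C f = y"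
  by (simp add: hom_def)

lemma cat_comp:
  "category C \<Longrightarrow> f \<in> hom C x y \<Longrightarrow> g \<in> hom C y z \<Longrightarrow> Comp C g f \<in> hom C x z"
  unfolding category_def hom_def by auto

lemma cat_assoc:
  "category C \<Longrightarrow> f \<in> hom C x y \<Longrightarrow> g \<in> hom C y z \<Longrightarrow> h \<in> hom C z u \<Longrightarrow>
   Comp C h (Comp C g f) = Comp C (Comp C h g) f"
  unfolding category_def hom_def by auto

lemma cat_id: "category C \<Longrightarrow> x \<in> Ob C \<Longrightarrow> Id C x \<in> hom C x x"
  unfolding category_def by auto

lemma cat_idl: "category C \<Longrightarrow> f \<in> hom C x y \<Longrightarrow> Comp C (Id C y) f = f"
  unfolding category_def hom_def by auto

lemma cat_idr: "category C \<Longrightarrow> f \<in> hom C x y \<Longrightarrow> Comp C f (Id C x) = f"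
  unfolding category_def hom_def by auto

lemma cat_ob: "category C \<Longrightarrow> f \<in> hom C x y \<Longrightarrow> x \<in> Ob C \<and> y \<in> Ob C"
  unfolding category_def hom_def by auto

lemma po_sym: "is_pushout C f i j g \<Longrightarrow> is_pushout C i f g j"
  unfolding is_pushout_def by (auto simp: hom_def) (metis)+

lemma po_basic:
  assumes "is_pushout C f i j g"
  shows "f \<in> hom C (Dom C f) (Cod C f)" "i \<in> hom C (Dom C f) (Cod C i)"
    "j \<in> hom C (Cod C f) (Cod C j)" "g \<in> hom C (Cod C i) (Cod C j)"
    "Comp C j f = Comp C g i"
  using assms unfolding is_pushout_def hom_def by auto

lemma po_univ:
  assumes "is_pushout C f i j g" "u \<in> hom C (Cod C f) q" "v \<in> hom C (Cod C i) q"
    "Comp C u f = Comp C v i"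
  shows "\<exists>!h. h \<in> hom C (Cod C j) q \<and> Comp C h j = u \<and> Comp C h g = v"
  using assms unfolding is_pushout_def by blast

lemma po_uniq:
  assumes cat: "category C" and P: "is_pushout C f i j g"
    and h1: "h1 \<in> hom C (Cod C j) q" and h2: "h2 \<in> hom C (Cod C j) q"
    and e1: "Comp C h1 j = Comp C h2 j" and e2: "Comp C h1 g = Comp C h2 g"
  shows "h1 = h2"
proof -
  note B = po_basic[OF P]
  have u: "Comp C h1 j \<in> hom C (Cod C f) q" using cat_comp[OF cat B(3) h1] .
  have v: "Comp C h1 g \<in> hom C (Cod C i) q" using cat_comp[OF cat B(4) h1] .
  have "Comp C (Comp C h1 j) f = Comp C h1 (Comp C j f)"
    using cat_assoc[OF cat B(1) B(3) h1] by simp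
  also have "\<dots> = Comp C h1 (Comp C g i)" using B(5) by simp
  also have "\<dots> = Comp C (Comp C h1 g) i" using cat_assoc[OF cat B(2) B(4) h1] by simp
  finally have "Comp C (Comp C h1 j) f = Comp C (Comp C h1 g) i" .
  from po_univ[OF P u v this] h1 h2 e1 e2 show ?thesis by metis
qed


lemma paste:
  assumes cat: "category C" and P1: "is_pushout C f i j g" and P2: "is_pushout C j t q s"
    and t: "t \<in> hom C (Cod C f) z0"
  shows "is_pushout C i (Comp C t f) (Comp C q g) s"
proof -
  note B1 = po_basic[OF P1] and B2 = po_basic[OF P2]
  have Dj: "Dom C j = Cod C f" using B1(3) by (simp add: hom_def)
  have Ct: "Cod C t = z0" using t by (simp add: hom_def)
  have q: "q \<in> hom C (Cod C j) (Cod C q)" using B2(3) by (simp add: Dj)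
  have s: "s \<in> hom C z0 (Cod C q)" using B2(4) Ct by simp
  have tf: "Comp C t f \<in> hom C (Dom C f) z0" using cat_comp[OF cat B1(1) t] .
  have qg: "Comp C q g \<in> hom C (Cod C i) (Cod C q)" using cat_comp[OF cat B1(4) q] .
  have qj: "Comp C q j = Comp C s t" using B2(5) .
  have sq: "Comp C (Comp C q g) i = Comp C s (Comp C t f)"
  proof -
    have "Comp C (Comp C q g) i = Comp C q (Comp C g i)" using cat_assoc[OF cat B1(2) B1(4) q] by simp
    also have "\<dots> = Comp C q (Comp C j f)" using B1(5) by simp
    also have "\<dots> = Comp C (Comp C q j) f" using cat_assoc[OF cat B1(1) B1(3) q] by simp
    also have "\<dots> = Comp C (Comp C s t) f" using qj by simp
    also have "\<dots> = Comp C s (Comp C t f)" using cat_assoc[OF cat B1(1) t s] by simp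
    finally show ?thesis .
  qed
  have univ: "\<exists>!m. m \<in> hom C (Cod C (Comp C q g)) W \<and> Comp C m (Comp C q g) = u \<and> Comp C m s = v"
    if u: "u \<in> hom C (Cod C i) W" and v: "v \<in> hom C (Cod C (Comp C t f)) W"
      and e: "Comp C u i = Comp C v (Comp C t f)" for W u v
  proof -
    have CC: "Cod C (Comp C q g) = Cod C q" "Cod C (Comp C t f) = z0" using qg tf by (auto simp: hom_def)
    have v': "v \<in> hom C z0 W" using v CC by simp
    have vt: "Comp C v t \<in> hom C (Cod C f) W" using cat_comp[OF cat t v'] .
    have e1: "Comp C (Comp C v t) f = Comp C u i"
      using e cat_assoc[OF cat B1(1) t v'] by simp
    obtain k where k: "k \<in> hom C (Cod C j) W" "Comp C k j = Comp C v t" "Comp C k g = u"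
      using po_univ[OF P1 vt u e1] by blast
    have k': "k \<in> hom C (Cod C j) W" using k(1) .
    have vt2: "v \<in> hom C (Cod C t) W" using v' Ct by simp
    have kk: "k \<in> hom C (Cod C j) W" using k(1) .
    have "\<exists>!m. m \<in> hom C (Cod C q) W \<and> Comp C m q = k \<and> Comp C m s = v"
      using po_univ[OF P2 _ vt2 k(2)] kk Dj by simp
    then obtain m where m: "m \<in> hom C (Cod C q) W" "Comp C m q = k" "Comp C m s = v" by blast
    have mqg: "Comp C m (Comp C q g) = u" using cat_assoc[OF cat B1(4) q m(1)] m(2) k(3) by simp
    show ?thesis
    proof (rule ex1I[of _ m])
      show "m \<in> hom C (Cod C (Comp C q g)) W \<and> Comp C m (Comp C q g) = u \<and> Comp C m s = v"
        using m mqg CC by simp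
    next
      fix m' assume m': "m' \<in> hom C (Cod C (Comp C q g)) W \<and> Comp C m' (Comp C q g) = u \<and> Comp C m' s = v"
      have m'h: "m' \<in> hom C (Cod C q) W" using m' CC by simp
      have mq: "Comp C m' q \<in> hom C (Cod C j) W" using cat_comp[OF cat q m'h] .
      have "Comp C (Comp C m' q) j = Comp C m' (Comp C q j)" using cat_assoc[OF cat B1(3) q m'h] Dj by simp
      also have "\<dots> = Comp C m' (Comp C s t)" using qj by simp
      also have "\<dots> = Comp C v t" using cat_assoc[OF cat t s m'h] m' by simp
      finally have a1: "Comp C (Comp C m' q) j = Comp C k j" using k(2) by simp
      have a2: "Comp C (Comp C m' q) g = Comp C k g" using cat_assoc[OF cat B1(4) q m'h] m' k(3) by simp
      have "Comp C m' q = k" using po_uniq[OF cat P1 mq k(1) a1 a2] .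
      then have b1: "Comp C m' q = Comp C m q" using m(2) by simp
      have b2: "Comp C m' s = Comp C m s" using m' m(3) by simp
      show "m' = m" using po_uniq[OF cat P2 _ _ b1 b2] m'h m(1) by simp
    qed
  qed
  have CC: "Cod C (Comp C q g) = Cod C q" "Cod C (Comp C t f) = z0" "Dom C (Comp C t f) = Dom C f"
    using qg tf by (auto simp: hom_def)
  have i: "i \<in> Mor C" "Dom C i = Dom C f" using B1(2) by (auto simp: hom_def)
  show ?thesis
    unfolding is_pushout_def
  proof (intro conjI allI impI)
    fix W u v assume "u \<in> hom C (Cod C i) W \<and> v \<in> hom C (Cod C (Comp C t f)) W \<and> Comp C u i = Comp C v (Comp C t f)"
    then show "\<exists>!m. m \<in> hom C (Cod C (Comp C q g)) W \<and> Comp C m (Comp C q g) = u \<and> Comp C m s = v"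
      using univ by blast
  qed (use i tf qg s sq CC in \<open>auto simp: hom_def\<close>)
qed


lemma cwc_po:
  assumes "cat_with_cof C" "i \<in> Cof C" "f \<in> Mor C" "Dom C f = Dom C i"
  shows "\<exists>j g. is_pushout C f i j g \<and> j \<in> Cof C"
proof -
  have "\<forall>i \<in> Cof C. \<forall>f \<in> Mor C. Dom C f = Dom C i \<longrightarrow>
        (\<exists>j g. is_pushout C f i j g \<and> j \<in> Cof C)"
    using assms(1) unfolding cat_with_cof_def by (elim conjE) assumption
  then show ?thesis using assms(2-) by blast
qed

lemma po_cof:
  assumes CW: "cat_with_cof C" and P: "is_pushout C f i j g" and ic: "i \<in> Cof C"
  shows "j \<in> Cof C"
proof -
  have cat: "category C" using CW by (simp add: cat_with_cof_def)
  note B = po_basic[OF P]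
  have fM: "f \<in> Mor C" "Dom C f = Dom C i" using P by (auto simp: is_pushout_def)
  obtain j0 g0 where P0: "is_pushout C f i j0 g0" and j0c: "j0 \<in> Cof C"
    using cwc_po[OF CW ic fM] by blast
  note B0 = po_basic[OF P0]
  obtain k where k: "k \<in> hom C (Cod C j0) (Cod C j)" "Comp C k j0 = j" "Comp C k g0 = g"
    using po_univ[OF P0 B(3) B(4) B(5)] by blast
  obtain l where l: "l \<in> hom C (Cod C j) (Cod C j0)" "Comp C l j = j0" "Comp C l g = g0"
    using po_univ[OF P B0(3) B0(4) B0(5)] by blast
  have lk: "Comp C l k \<in> hom C (Cod C j0) (Cod C j0)" using cat_comp[OF cat k(1) l(1)] .
  have kl: "Comp C k l \<in> hom C (Cod C j) (Cod C j)" using cat_comp[OF cat l(1) k(1)] .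
  have id0: "Id C (Cod C j0) \<in> hom C (Cod C j0) (Cod C j0)"
    using cat_id[OF cat] cat_ob[OF cat k(1)] by blast
  have id1: "Id C (Cod C j) \<in> hom C (Cod C j) (Cod C j)"
    using cat_id[OF cat] cat_ob[OF cat k(1)] by blast
  have "Comp C l k = Id C (Cod C j0)"
  proof (rule po_uniq[OF cat P0 lk id0])
    show "Comp C (Comp C l k) j0 = Comp C (Id C (Cod C j0)) j0"
      using cat_assoc[OF cat B0(3) k(1) l(1)] k(2) l(2) cat_idl[OF cat B0(3)] by simp
    show "Comp C (Comp C l k) g0 = Comp C (Id C (Cod C j0)) g0"
      using cat_assoc[OF cat B0(4) k(1) l(1)] k(3) l(3) cat_idl[OF cat B0(4)] by simp
  qed
  moreover have "Comp C k l = Id C (Cod C j)"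
  proof (rule po_uniq[OF cat P kl id1])
    show "Comp C (Comp C k l) j = Comp C (Id C (Cod C j)) j"
      using cat_assoc[OF cat B(3) l(1) k(1)] k(2) l(2) cat_idl[OF cat B(3)] by simp
    show "Comp C (Comp C k l) g = Comp C (Id C (Cod C j)) g"
      using cat_assoc[OF cat B(4) l(1) k(1)] k(3) l(3) cat_idl[OF cat B(4)] by simp
  qed
  ultimately have "iso C k" using k(1) l(1) unfolding iso_def hom_def by auto
  then have kc: "k \<in> Cof C" using CW by (simp add: cat_with_cof_def)
  have "Comp C k j0 \<in> Cof C"
    using CW kc j0c k(1) B0(3) unfolding cat_with_cof_def hom_def by auto
  then show ?thesis using k(2) by simp
qed


lemma cokernel_exists:
  assumes CW: "cat_with_cof C" and jc: "j \<in> Cof C"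
  obtains t q s where "t \<in> hom C (Dom C j) (Zob C)" "is_pushout C j t q s"
proof -
  have cat: "category C" and Z: "zero_object C (Zob C)" and cofM: "Cof C \<subseteq> Mor C"
    using CW by (simp_all add: cat_with_cof_def)
  have jM: "j \<in> Mor C" using jc cofM by auto
  then have "Dom C j \<in> Ob C" using cat by (simp add: category_def)
  then have "\<exists>!f. f \<in> hom C (Dom C j) (Zob C)" using Z unfolding zero_object_def by simp
  then obtain t where t: "t \<in> hom C (Dom C j) (Zob C)" by auto
  have "t \<in> Mor C" "Dom C t = Dom C j" using t by (auto simp: hom_def)
  then obtain s q where P: "is_pushout C t j s q" using cwc_po[OF CW jc] by blast
  show ?thesis by (rule that[OF t po_sym[OF P]])
qed

lemma zero_uniq:
  assumes CW: "cat_with_cof C" and t1: "t1 \<in> hom C y (Zob C)" and t2: "t2 \<in> hom C y (Zob C)"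
  shows "t1 = t2"
proof -
  have cat: "category C" and Z: "zero_object C (Zob C)" using CW by (simp_all add: cat_with_cof_def)
  have "y \<in> Ob C" using cat_ob[OF cat t1] by simp
  then have "\<exists>!f. f \<in> hom C y (Zob C)" using Z unfolding zero_object_def by simp
  then show ?thesis using t1 t2 by auto
qed

lemma adm_seq:
  assumes "admissible C w" "cof_seq C i q" "cof_seq C i' q'"
    "a \<in> hom C (Dom C i) (Dom C i')" "b \<in> hom C (Cod C i) (Cod C i')"
    "c \<in> hom C (Cod C q) (Cod C q')" "Comp C b i = Comp C i' a" "Comp C c q = Comp C q' b"
  shows "(a \<in> w \<and> b \<in> w \<longrightarrow> c \<in> w) \<and> (a \<in> w \<and> c \<in> w \<longrightarrow> b \<in> w) \<and> (b \<in> w \<and> c \<in> w \<longrightarrow> a \<in> w)"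
proof -
  have "\<forall>i q i' q' a b c.
        cof_seq C i q \<and> cof_seq C i' q' \<and>
        a \<in> hom C (Dom C i) (Dom C i') \<and> b \<in> hom C (Cod C i) (Cod C i') \<and>
        c \<in> hom C (Cod C q) (Cod C q') \<and>
        Comp C b i = Comp C i' a \<and> Comp C c q = Comp C q' b \<longrightarrow>
        (a \<in> w \<and> b \<in> w \<longrightarrow> c \<in> w) \<and>
        (a \<in> w \<and> c \<in> w \<longrightarrow> b \<in> w) \<and>
        (b \<in> w \<and> c \<in> w \<longrightarrow> a \<in> w)" using assms(1) unfolding admissible_def by (elim conjE) assumption
  note H = this[rule_format, of i q i' q' a b c]
  show ?thesis by (rule H) (use assms(2-) in simp)
qed

lemma gluing_holds:
  assumes CW: "cat_with_cof C" and adm: "admissible C w"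
  shows "gluing C w"
  unfolding gluing_def
proof (intro allI impI)
  fix f i j g f' i' j' g' a b c h
  assume H: "is_pushout C f i j g \<and> is_pushout C f' i' j' g' \<and> i \<in> Cof C \<and> i' \<in> Cof C \<and>
        a \<in> hom C (Dom C f) (Dom C f') \<and> b \<in> hom C (Cod C f) (Cod C f') \<and>
        c \<in> hom C (Cod C i) (Cod C i') \<and>
        Comp C b f = Comp C f' a \<and> Comp C c i = Comp C i' a \<and>
        a \<in> w \<and> b \<in> w \<and> c \<in> w \<and>
        h \<in> hom C (Cod C j) (Cod C j') \<and> Comp C h j = Comp C j' b \<and> Comp C h g = Comp C g' c"
  have cat: "category C" using CW by (simp add: cat_with_cof_def)
  have P: "is_pushout C f i j g" and P': "is_pushout C f' i' j' g'" and ic: "i \<in> Cof C"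
    and ic': "i' \<in> Cof C" and a: "a \<in> hom C (Dom C f) (Dom C f')"
    and b: "b \<in> hom C (Cod C f) (Cod C f')" and c: "c \<in> hom C (Cod C i) (Cod C i')"
    and ca: "Comp C c i = Comp C i' a" and aw: "a \<in> w" and bw: "b \<in> w" and cw: "c \<in> w"
    and h: "h \<in> hom C (Cod C j) (Cod C j')" and hj: "Comp C h j = Comp C j' b"
    and hg: "Comp C h g = Comp C g' c" using H by auto
  note B = po_basic[OF P] and B' = po_basic[OF P']
  have Dj: "Dom C j = Cod C f" and Dj': "Dom C j' = Cod C f'" and Di: "Dom C i = Dom C f"
    and Di': "Dom C i' = Dom C f'"
    using B(3) B'(3) B(2) B'(2) by (auto simp: hom_def)
  have jc: "j \<in> Cof C" using po_cof[OF CW P ic] .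
  have jc': "j' \<in> Cof C" using po_cof[OF CW P' ic'] .
  obtain t2 q2 s2 where t2: "t2 \<in> hom C (Dom C j) (Zob C)" and P2: "is_pushout C j t2 q2 s2"
    using cokernel_exists[OF CW jc] by blast
  obtain t2' q2' s2' where t2': "t2' \<in> hom C (Dom C j') (Zob C)" and P2': "is_pushout C j' t2' q2' s2'"
    using cokernel_exists[OF CW jc'] by blast
  note B2 = po_basic[OF P2] and B2' = po_basic[OF P2']
  have t2f: "t2 \<in> hom C (Cod C f) (Zob C)" using t2 Dj by simp
  have t2f': "t2' \<in> hom C (Cod C f') (Zob C)" using t2' Dj' by simp
  have PP: "is_pushout C i (Comp C t2 f) (Comp C q2 g) s2" using paste[OF cat P P2 t2f] .
  have PP': "is_pushout C i' (Comp C t2' f') (Comp C q2' g') s2'" using paste[OF cat P' P2' t2f'] .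
  have cs1: "cof_seq C i (Comp C q2 g)"
    unfolding cof_seq_def using ic PP cat_comp[OF cat B(1) t2f] Di by auto
  have cs1': "cof_seq C i' (Comp C q2' g')"
    unfolding cof_seq_def using ic' PP' cat_comp[OF cat B'(1) t2f'] Di' by auto
  have cs2: "cof_seq C j q2" unfolding cof_seq_def using jc P2 t2 by auto
  have cs2': "cof_seq C j' q2' " unfolding cof_seq_def using jc' P2' t2' by auto
  have Ct2: "Cod C t2 = Zob C" "Cod C t2' = Zob C" using t2 t2' by (auto simp: hom_def)
  have q2': "q2' \<in> hom C (Cod C j') (Cod C q2')" using B2'(3) Dj' by simp
  have q2: "q2 \<in> hom C (Cod C j) (Cod C q2)" using B2(3) Dj by simp
  have u: "Comp C q2' h \<in> hom C (Cod C j) (Cod C q2')" using cat_comp[OF cat h q2'] .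
  have v: "s2' \<in> hom C (Cod C t2) (Cod C q2')" using B2'(4) Ct2 by simp
  have tb: "Comp C t2' b = t2" using zero_uniq[OF CW cat_comp[OF cat b t2f'] t2f] .
  have "Comp C (Comp C q2' h) j = Comp C q2' (Comp C h j)" using cat_assoc[OF cat B(3) h q2'] by simp
  also have "\<dots> = Comp C q2' (Comp C j' b)" using hj by simp
  also have "\<dots> = Comp C (Comp C q2' j') b" using cat_assoc[OF cat b B'(3) q2'] by simp
  also have "\<dots> = Comp C (Comp C s2' t2') b" using B2'(5) by simp
  also have "\<dots> = Comp C s2' (Comp C t2' b)" using cat_assoc[OF cat b t2f'] B2'(4) Ct2 by simp
  finally have e: "Comp C (Comp C q2' h) j = Comp C s2' t2" using tb by simp
  obtain cb where cb: "cb \<in> hom C (Cod C q2) (Cod C q2')" "Comp C cb q2 = Comp C q2' h"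
    "Comp C cb s2 = s2'"
    using po_univ[OF P2 u v e] B2(3) Dj by (auto simp: hom_def)
  have "Comp C cb (Comp C q2 g) = Comp C (Comp C cb q2) g" using cat_assoc[OF cat B(4) q2 cb(1)] by simp
  also have "\<dots> = Comp C q2' (Comp C h g)" using cb(2) cat_assoc[OF cat B(4) h q2'] by simp
  also have "\<dots> = Comp C q2' (Comp C g' c)" using hg by simp
  also have "\<dots> = Comp C (Comp C q2' g') c" using cat_assoc[OF cat c B'(4) q2'] by simp
  finally have e2: "Comp C cb (Comp C q2 g) = Comp C (Comp C q2' g') c" .
  have cbh: "cb \<in> hom C (Cod C (Comp C q2 g)) (Cod C (Comp C q2' g'))"
    using cb(1) cat_comp[OF cat B(4) q2] cat_comp[OF cat B'(4) q2'] by (auto simp: hom_def)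
  have a2: "a \<in> hom C (Dom C i) (Dom C i')" using a Di Di' by simp
  have "cb \<in> w"
    using adm_seq[OF adm cs1 cs1' a2 c cbh ca e2] aw cw by blast
  moreover have b2: "b \<in> hom C (Dom C j) (Dom C j')" using b Dj Dj' by simp
  moreover have h2: "h \<in> hom C (Cod C j) (Cod C j')" using h .
  ultimately show "h \<in> w"
    using adm_seq[OF adm cs2 cs2' b2 h2 cb(1) hj cb(2)] bw by blast
qed

theorem lemma1p2:
  fixes C :: "('o, 'm) cofcat" and w :: "'m set"
  assumes "cat_with_cof C"
    and "ab_enriched C"
    and "admissible C w"
  shows "gluing C w \<and> waldhausen_cat C w"
proof -
  have G: "gluing C w" using gluing_holds[OF assms(1) assms(3)] .
  have wM: "w \<subseteq> Mor C" using assms(3) by (simp add: admissible_def)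
  have A: "\<forall>f \<in> Mor C. \<forall>g \<in> Mor C. Cod C f = Dom C g \<longrightarrow>
        (f \<in> w \<and> g \<in> w \<longrightarrow> Comp C g f \<in> w)" "\<forall>f. iso C f \<longrightarrow> f \<in> w"
    using assms(3) unfolding admissible_def by blast+
  have "\<forall>f \<in> w. \<forall>g \<in> w. Cod C f = Dom C g \<longrightarrow> Comp C g f \<in> w"
    using A(1) wM by blast
  then show ?thesis using G assms(1) wM A(2) unfolding waldhausen_cat_def by blast
qed

end
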